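(* Let $\mathfrak{S}=(\mathcal{X},\mathsf{S},\gamma,(\Lambda_{a})_{a\in\mathcal{A}})$ be a spectral decomposition system for the Euclidean space $\mathfrak{H}$ and let $D$ be an $\mathsf{S}$-invariant subset of $\mathcal{X}$. Then: (i) $\operatorname{int}\gamma^{-1}(D)=\gamma^{-1}(\operatorname{int}D)$; (ii) $\overline{\gamma^{-1}(D)}=\gamma^{-1}(\overline{D})$ (closures); (iii) $\gamma^{-1}(D)$ is closed if and only if $D$ is closed; (iv) $\gamma^{-1}(D)$ is convex if and only if $D$ is convex.
   Context: A Euclidean space is a finite-dimensional real inner product space; inner products are written $\langle\cdot,\cdot\rangle$ and norms $\|\cdot\|$. Let $\mathfrak{H}$ and $\mathcal{X}$ be Euclidean spaces, let $\mathsf{S}$ be a group acting on $\mathcal{X}$ by linear isometries, let $\gamma\colon\mathfrak{H}\to\mathcal{X}$, and let $(\Lambda_a)_{a\in\mathcal{A}}$ be a family of linear operators from $\mathcal{X}$ to $\mathfrak{H}$. The orbit of $x$ is $\mathsf{S}\cdot x=\{s\cdot x: s\in\mathsf{S}\}$; a map $f$ on $\mathcal{X}$ is $\mathsf{S}$-invariant if $f(s\cdot x)=f(x)$ for all $s,x$; a subset $D$ of $\mathcal{X}$ is $\mathsf{S}$-invariant if $s\cdot x\in D$ whenever $x\in D$, $s\in\mathsf{S}$. The tuple is a spectral decomposition system for $\mathfrak{H}$ if: [A] every $\Lambda_a$ is an isometry; [B] there exists an $\mathsf{S}$-invariant $\tau\colon\mathcal{X}\to\mathcal{X}$ with $\tau(x)\in\mathsf{S}\cdot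 x$ for all $x$ and $\gamma\circ\Lambda_a=\tau$ for all $a$; [C] for every $X\in\mathfrak{H}$ there is $a$ with $X=\Lambda_a\gamma(X)$; [D] $\langle X,Y\rangle\leq\langle\gamma(X),\gamma(Y)\rangle$ for all $X,Y\in\mathfrak{H}$. *)

theory Defs
  imports "HOL-Analysis.Analysis"
begin

definition lin_isometry_group :: "('x::euclidean_space \<Rightarrow> 'x) set \<Rightarrow> bool" where
  "lin_isometry_group S \<longleftrightarrow>
     id \<in> S \<and> (\<forall>s\<in>S. \<forall>t\<in>S. s \<circ> t \<in> S) \<and>
     (\<forall>s\<in>S. \<exists>t\<in>S. s \<circ> t = id \<and> t \<circ> s = id) \<and>
     (\<forall>s\<in>S. linear s \<and> (\<forall>x. norm (s x) = norm x))"

definition orbit :: "('x \<Rightarrow> 'x) set \<Rightarrow> 'x \<Rightarrow> 'x set" where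
  "orbit S x = (\<lambda>s. s x) ` S"

definition S_invariant_fun :: "('x \<Rightarrow> 'x) set \<Rightarrow> ('x \<Rightarrow> 'b) \<Rightarrow> bool" where
  "S_invariant_fun S f \<longleftrightarrow> (\<forall>s\<in>S. \<forall>x. f (s x) = f x)"

definition S_invariant_set :: "('x \<Rightarrow> 'x) set \<Rightarrow> 'x set \<Rightarrow> bool" where
  "S_invariant_set S D \<longleftrightarrow> (\<forall>s\<in>S. \<forall>x\<in>D. s x \<in> D)"

definition spectral_decomposition_system ::
  "('x::euclidean_space \<Rightarrow> 'x) set \<Rightarrow> ('h::euclidean_space \<Rightarrow> 'x) \<Rightarrow> 'a set \<Rightarrow> ('a \<Rightarrow> 'x \<Rightarrow> 'h) \<Rightarrow> bool"
where
  "spectral_decomposition_system S \<gamma> A \<Lambda> \<longleftrightarrow>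
     lin_isometry_group S \<and>
     (\<forall>a\<in>A. linear (\<Lambda> a) \<and> (\<forall>x. norm (\<Lambda> a x) = norm x)) \<and>
     (\<exists>\<tau>. S_invariant_fun S \<tau> \<and> (\<forall>x. \<tau> x \<in> orbit S x) \<and> (\<forall>a\<in>A. \<gamma> \<circ> \<Lambda> a = \<tau>)) \<and>
     (\<forall>X. \<exists>a\<in>A. X = \<Lambda> a (\<gamma> X)) \<and>
     (\<forall>X Y. inner X Y \<le> inner (\<gamma> X) (\<gamma> Y))"

end

theory Submission
  imports Defs
begin

lemma lin_iso_inner:
  assumes "linear f" "\<And>x. norm (f x) = norm x"
  shows "inner (f x) (f y) = inner x y"
proof -
  have "norm (f (x+y))^2 = norm (x+y)^2" using assms(2) by simp
  hence "norm (f x + f y)^2 = norm (x+y)^2" using linear_add[OF assms(1)] by simp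
  hence "inner (f x + f y) (f x + f y) = inner (x+y) (x+y)" by (simp add: power2_norm_eq_inner)
  moreover have "inner (f x) (f x) = inner x x" "inner (f y) (f y) = inner y y"
    using assms(2)[of x] assms(2)[of y] by (metis power2_norm_eq_inner)+
  ultimately show ?thesis by (simp add: inner_add inner_commute)
qed

theorem corollary4p8:
  fixes S :: "('x::euclidean_space \<Rightarrow> 'x) set"
    and \<gamma> :: "'h::euclidean_space \<Rightarrow> 'x"
    and A :: "'a set"
    and \<Lambda> :: "'a \<Rightarrow> 'x \<Rightarrow> 'h"
    and D :: "'x set"
  assumes "spectral_decomposition_system S \<gamma> A \<Lambda>"
    and "S_invariant_set S D"
  shows "interior (\<gamma> -` D) = \<gamma> -` (interior D) \<and>
         closure (\<gamma> -` D) = \<gamma> -` (closure D) \<and>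
         (closed (\<gamma> -` D) \<longleftrightarrow> closed D) \<and>
         (convex (\<gamma> -` D) \<longleftrightarrow> convex D)"
proof -
  have G: "lin_isometry_group S"
    and LA: "\<And>a. a \<in> A \<Longrightarrow> linear (\<Lambda> a) \<and> (\<forall>x. norm (\<Lambda> a x) = norm x)"
    and C: "\<And>X. \<exists>a\<in>A. X = \<Lambda> a (\<gamma> X)"
    and Dd: "\<And>X Y. inner X Y \<le> inner (\<gamma> X) (\<gamma> Y)"
    using assms(1) unfolding spectral_decomposition_system_def by auto
  obtain \<tau> where tinv: "S_invariant_fun S \<tau>" and torb: "\<And>x. \<tau> x \<in> orbit S x"
    and tA: "\<And>a. a \<in> A \<Longrightarrow> \<gamma> \<circ> \<Lambda> a = \<tau>"
    using assms(1) unfolding spectral_decomposition_system_def by blast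
  have Sinv: "\<And>s. s \<in> S \<Longrightarrow> \<exists>t\<in>S. s \<circ> t = id \<and> t \<circ> s = id"
    and Slin: "\<And>s. s \<in> S \<Longrightarrow> linear s"
    and Snorm: "\<And>s x. s \<in> S \<Longrightarrow> norm (s x) = norm x"
    and Scomp: "\<And>s t. s \<in> S \<Longrightarrow> t \<in> S \<Longrightarrow> s \<circ> t \<in> S"
    using G unfolding lin_isometry_group_def by auto
  have Sinner: "\<And>s x y. s \<in> S \<Longrightarrow> inner (s x) (s y) = inner x y"
    using Slin Snorm lin_iso_inner by blast
  have Linner: "\<And>a x y. a \<in> A \<Longrightarrow> inner (\<Lambda> a x) (\<Lambda> a y) = inner x y"
    using LA lin_iso_inner by blast
  have DS: "\<And>s x. s \<in> S \<Longrightarrow> x \<in> D \<Longrightarrow> s x \<in> D"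
    using assms(2) unfolding S_invariant_set_def by auto
  have tau_eq: "\<And>s x. s \<in> S \<Longrightarrow> \<tau> (s x) = \<tau> x"
    using tinv unfolding S_invariant_fun_def by auto
  have gL: "\<And>a x. a \<in> A \<Longrightarrow> \<gamma> (\<Lambda> a x) = \<tau> x"
    using tA by (metis comp_apply)
  obtain a0 where a0: "a0 \<in> A" using C by blast
  have tauD: "\<And>x. \<tau> x \<in> D \<longleftrightarrow> x \<in> D"
  proof -
    fix x
    obtain s where s: "s \<in> S" "\<tau> x = s x" using torb[of x] unfolding orbit_def by auto
    obtain t where t: "t \<in> S" "t \<circ> s = id" using Sinv[OF s(1)] by blast
    have "x = t (\<tau> x)" using s(2) t(2) by (metis comp_apply id_apply)
    thus "\<tau> x \<in> D \<longleftrightarrow> x \<in> D" using DS s t by metis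
  qed
  have Lpre: "\<And>a. a \<in> A \<Longrightarrow> \<Lambda> a -` (\<gamma> -` D) = D"
    using gL tauD by auto
  have gnorm: "\<And>X. norm (\<gamma> X) = norm X"
    using C LA by metis
  have glip: "1-lipschitz_on UNIV \<gamma>"
  proof (rule lipschitz_onI)
    fix X Y :: 'h
    have "(norm (\<gamma> X - \<gamma> Y))^2 \<le> (norm (X - Y))^2"
    proof -
      have e1: "inner (\<gamma> X) (\<gamma> X) = inner X X" "inner (\<gamma> Y) (\<gamma> Y) = inner Y Y"
        using gnorm[of X] gnorm[of Y] by (metis power2_norm_eq_inner)+
      show ?thesis using Dd[of X Y] e1
        by (simp add: power2_norm_eq_inner inner_diff inner_commute algebra_simps)
    qed
    hence "norm (\<gamma> X - \<gamma> Y) \<le> norm (X - Y)"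
      using power2_le_imp_le by fastforce
    thus "dist (\<gamma> X) (\<gamma> Y) \<le> 1 * dist X Y" by (simp add: dist_norm)
  qed simp
  have gcont: "continuous_on UNIV \<gamma>"
    using glip lipschitz_on_continuous_on by blast
  have Lcont: "\<And>a. a \<in> A \<Longrightarrow> continuous_on UNIV (\<Lambda> a)"
    using LA linear_continuous_on linear_conv_bounded_linear by blast
  have int1: "\<gamma> -` interior D \<subseteq> interior (\<gamma> -` D)"
  proof (rule interior_maximal)
    show "\<gamma> -` interior D \<subseteq> \<gamma> -` D" using interior_subset by blast
    show "open (\<gamma> -` interior D)" using open_vimage[OF open_interior gcont] .
  qed
  have int2: "interior (\<gamma> -` D) \<subseteq> \<gamma> -` interior D"
  proof
    fix X assume X: "X \<in> interior (\<gamma> -` D)"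
    obtain a where a: "a\<in>A" "X = \<Lambda> a (\<gamma> X)" using C by blast
    have "open (\<Lambda> a -` interior (\<gamma> -` D))" using open_vimage[OF open_interior Lcont[OF a(1)]] .
    moreover have "\<gamma> X \<in> \<Lambda> a -` interior (\<gamma> -` D)" using X a by (metis vimageI2)
    moreover have "\<Lambda> a -` interior (\<gamma> -` D) \<subseteq> D" using Lpre[OF a(1)] interior_subset by blast
    ultimately have "\<gamma> X \<in> interior D" by (meson interior_maximal subsetD interiorI)
    thus "X \<in> \<gamma> -` interior D" by simp
  qed
  have cl1: "closure (\<gamma> -` D) \<subseteq> \<gamma> -` closure D"
    by (rule closure_minimal) (use closure_subset closed_vimage[OF closed_closure gcont] in auto)
  have cl2: "\<gamma> -` closure D \<subseteq> closure (\<gamma> -` D)"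
  proof
    fix X assume X: "X \<in> \<gamma> -` closure D"
    obtain a where a: "a\<in>A" "X = \<Lambda> a (\<gamma> X)" using C by blast
    have "\<Lambda> a ` closure D \<subseteq> closure (\<gamma> -` D)"
    proof (rule image_closure_subset)
      show "continuous_on (closure D) (\<Lambda> a)" using Lcont[OF a(1)] continuous_on_subset by blast
      show "\<Lambda> a ` D \<subseteq> closure (\<gamma> -` D)" using Lpre[OF a(1)] closure_subset by blast
    qed simp
    thus "X \<in> closure (\<gamma> -` D)" using X a by (metis imageI subsetD vimageE)
  qed
  have clo: "closed (\<gamma> -` D) \<longleftrightarrow> closed D"
  proof
    assume "closed (\<gamma> -` D)"
    hence "closed (\<Lambda> a0 -` (\<gamma> -` D))" using closed_vimage Lcont[OF a0] by blast
    thus "closed D" using Lpre[OF a0] by simp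
  next
    assume "closed D" thus "closed (\<gamma> -` D)" using closed_vimage gcont by blast
  qed
  have orbit_closed: "closed (orbit S x)" for x
  proof -
    have "closure (orbit S x) \<subseteq> orbit S x"
    proof
      fix p assume p: "p \<in> closure (orbit S x)"
      have bnd: "inner w q \<le> inner (\<tau> w) (\<tau> x)" if qo: "q \<in> orbit S x" for w q
      proof -
        obtain s where s: "s \<in> S" "q = s x" using qo unfolding orbit_def by auto
        have "inner w q = inner (\<Lambda> a0 w) (\<Lambda> a0 (s x))" using Linner[OF a0] s by simp
        also have "\<dots> \<le> inner (\<gamma> (\<Lambda> a0 w)) (\<gamma> (\<Lambda> a0 (s x)))" by (rule Dd)
        also have "\<dots> = inner (\<tau> w) (\<tau> x)" using gL[OF a0] tau_eq[OF s(1)] by simp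
        finally show ?thesis .
      qed
      have pb: "inner w p \<le> inner (\<tau> w) (\<tau> x)" for w
      proof -
        have "closure (orbit S x) \<subseteq> {q. inner w q \<le> inner (\<tau> w) (\<tau> x)}"
          by (rule closure_minimal) (use bnd closed_halfspace_le in auto)
        thus ?thesis using p by auto
      qed
      have "closure (orbit S x) \<subseteq> sphere 0 (norm x)"
        by (rule closure_minimal) (auto simp: orbit_def Snorm)
      hence np: "norm p = norm x" using p by auto
      have ntau: "norm (\<tau> y) = norm y" for y
        using torb[of y] Snorm unfolding orbit_def by auto
      have h1: "inner p p \<le> inner (\<tau> p) (\<tau> x)" using pb .
      have "inner (\<tau> p) (\<tau> x) \<le> norm (\<tau> p) * norm (\<tau> x)" by (rule norm_cauchy_schwarz)
      also have "\<dots> = inner p p" using ntau[of p] ntau[of x] np power2_norm_eq_inner[of p] by (simp add: power2_eq_square)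
      finally have "inner (\<tau> p) (\<tau> x) \<le> inner p p" .
      with h1 have eq: "inner (\<tau> p) (\<tau> x) = inner p p" by linarith
      have e1: "inner (\<tau> p) (\<tau> p) = inner p p" using ntau[of p] by (metis power2_norm_eq_inner)
      have e2: "inner (\<tau> x) (\<tau> x) = inner p p" using ntau[of x] np by (metis power2_norm_eq_inner)
      have "inner (\<tau> p - \<tau> x) (\<tau> p - \<tau> x) = 0"
        using eq e1 e2 inner_commute[of "\<tau> x" "\<tau> p"] by (simp add: inner_diff_left inner_diff_right)
      hence tpx: "\<tau> p = \<tau> x" by simp
      obtain s0 where s0: "s0 \<in> S" "\<tau> p = s0 p" using torb[of p] unfolding orbit_def by auto
      obtain t0 where t0: "t0 \<in> S" "t0 \<circ> s0 = id" using Sinv[OF s0(1)] by blast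
      obtain s1 where s1: "s1 \<in> S" "\<tau> x = s1 x" using torb[of x] unfolding orbit_def by auto
      have "p = t0 (s0 p)" using t0(2) by (metis comp_apply id_apply)
      also have "\<dots> = (t0 \<circ> s1) x" using s0 s1 tpx by simp
      finally show "p \<in> orbit S x" unfolding orbit_def using Scomp[OF t0(1) s1(1)] by blast
    qed
    thus ?thesis using closure_subset_eq by blast
  qed
  have orbit_compact: "compact (orbit S x)" for x
  proof -
    have "orbit S x \<subseteq> cball 0 (norm x)" by (auto simp: orbit_def Snorm)
    hence "bounded (orbit S x)" using bounded_subset bounded_cball by blast
    thus ?thesis using orbit_closed compact_eq_bounded_closed by blast
  qed
  have cvx: "convex (\<gamma> -` D) \<longleftrightarrow> convex D"
  proof
    assume "convex (\<gamma> -` D)"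
    hence "convex (\<Lambda> a0 -` (\<gamma> -` D))" using convex_linear_vimage LA[OF a0] by blast
    thus "convex D" using Lpre[OF a0] by simp
  next
    assume cD: "convex D"
    show "convex (\<gamma> -` D)"
    proof (rule convexI)
      fix X Y :: 'h and u v :: real
      assume X: "X \<in> \<gamma> -` D" and Y: "Y \<in> \<gamma> -` D" and u: "0 \<le> u" and v: "0 \<le> v" and uv: "u + v = 1"
      define Z where "Z = u *\<^sub>R X + v *\<^sub>R Y"
      define v0 where "v0 = u *\<^sub>R \<gamma> X + v *\<^sub>R \<gamma> Y"
      have v0D: "v0 \<in> D" using convexD[OF cD, of "\<gamma> X" "\<gamma> Y" u v] X Y u v uv unfolding v0_def by simp
      define Cs where "Cs = convex hull (orbit S v0)"
      have CsD: "Cs \<subseteq> D" unfolding Cs_def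
      proof (rule hull_minimal)
        show "orbit S v0 \<subseteq> D" unfolding orbit_def using DS v0D by blast
        show "convex D" by (rule cD)
      qed
      have Csc: "closed Cs" "convex Cs" unfolding Cs_def
        by (rule compact_imp_closed[OF compact_convex_hull[OF orbit_compact]]) (rule convex_convex_hull)
      have key: "\<exists>q\<in>orbit S v0. inner w (\<gamma> Z) \<le> inner w q" for w
      proof -
        obtain a where a: "a\<in>A" "Z = \<Lambda> a (\<gamma> Z)" using C by blast
        define W where "W = \<Lambda> a w"
        obtain s where s: "s \<in> S" "\<tau> w = s w" using torb[of w] unfolding orbit_def by auto
        obtain t where t: "t \<in> S" "s \<circ> t = id" using Sinv[OF s(1)] by blast
        have "inner W Z = inner W (\<Lambda> a (\<gamma> Z))" using arg_cong[OF a(2), of "inner W"] .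
        hence "inner w (\<gamma> Z) = inner W Z" unfolding W_def using Linner[OF a(1), of w "\<gamma> Z"] by (simp only: W_def)
        also have "\<dots> = u * inner W X + v * inner W Y" unfolding Z_def by (simp add: inner_add_right)
        also have "\<dots> \<le> u * inner (\<gamma> W) (\<gamma> X) + v * inner (\<gamma> W) (\<gamma> Y)"
          by (intro add_mono mult_left_mono Dd u v)
        also have "\<dots> = inner (\<gamma> W) v0" unfolding v0_def by (simp add: inner_add_right)
        also have "\<dots> = inner (s w) (s (t v0))"
        proof -
          have "\<gamma> W = s w" unfolding W_def using gL[OF a(1)] s(2) by simp
          moreover have "s (t v0) = v0" using fun_cong[OF t(2), of v0] by simp
          ultimately show ?thesis by simp
        qed
        also have "\<dots> = inner w (t v0)" using Sinner[OF s(1)] .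
        finally have "inner w (\<gamma> Z) \<le> inner w (t v0)" .
        moreover have "t v0 \<in> orbit S v0" unfolding orbit_def using t(1) by (rule imageI)
        ultimately show ?thesis by (intro bexI)
      qed
      have "\<gamma> Z \<in> Cs"
      proof (rule ccontr)
        assume nZ: "\<gamma> Z \<notin> Cs"
        obtain a' b where ab: "inner a' (\<gamma> Z) < b" "\<forall>x\<in>Cs. b < inner a' x"
          using separating_hyperplane_closed_point[OF Csc(2) Csc(1) nZ] by (elim exE conjE)
        obtain q where q: "q \<in> orbit S v0" "inner (-a') (\<gamma> Z) \<le> inner (-a') q" using key[of "-a'"] by (elim bexE)
        have "q \<in> Cs" unfolding Cs_def by (rule subsetD[OF hull_subset q(1)])
        hence "b < inner a' q" using ab(2) by (rule bspec[rotated])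
        moreover have "inner a' q \<le> inner a' (\<gamma> Z)" using q(2) by (simp only: inner_minus_left neg_le_iff_le)
        ultimately show False using ab(1) by linarith
      qed
      hence "\<gamma> Z \<in> D" using CsD by (rule subsetD[rotated])
      thus "u *\<^sub>R X + v *\<^sub>R Y \<in> \<gamma> -` D" unfolding Z_def by (rule vimageI2)
    qed
  qed
  show ?thesis using int1 int2 cl1 cl2 clo cvx by blast
qed

end
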